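(* Let $(M,g)$ be a Bianchi spacetime solving Einstein's equations $\mathrm{Ric}-\frac12Sg+\Lambda g=T$ with $\rho\geq0$ and $\Lambda\geq0$. Then for all $v\in\mathbb R^3$ and all $t\in I$ with $\theta(t)\neq0$, $$(2\delta^i_m-3\Sigma^i{}_m)a^{mj}v_iv_j\geq-\frac32\frac{\bar S_+}{\theta^2}a^{ij}v_iv_j,$$ where $\bar S_+=\max\{\bar S,0\}$.
   Context: A Bianchi spacetime is $M=G\times I$, $I=(t_-,t_+)$, with $G$ a connected 3-dimensional Lie group, $g=-dt\otimes dt+a_{ij}(t)\xi^i\otimes\xi^j$, $\{\xi^i\}$ dual to a basis $\{e_i\}$ of left invariant vector fields, $a(t)$ positive definite with inverse entries $a^{ij}$. $\bar k_{ij}=\frac12\dot a_{ij}$, $\theta=a^{ij}\bar k_{ij}$, $\bar\sigma_{ij}=\bar k_{ij}-\frac13\theta a_{ij}$, $\Sigma_{ij}=\bar\sigma_{ij}/\theta$, $\Sigma^i{}_m=a^{ij}\Sigma_{jm}$. $\rho=T_{00}$ in the frame $\partial_t,e_i$. $\bar S$ is the scalar curvature of $G\times\{t\}$ with the induced metric. Summation over repeated indices. *)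

theory Defs
  imports Complex_Main
begin

text \<open>Matrices are nat-indexed functions; only indices below n matter.\<close>

definition mat_inv :: "nat \<Rightarrow> (nat \<Rightarrow> nat \<Rightarrow> real) \<Rightarrow> nat \<Rightarrow> nat \<Rightarrow> real" where
  "mat_inv n A = (THE B. (\<forall>i<n. \<forall>k<n. (\<Sum>j<n. A i j * B j k) = (if i = k then 1 else 0))
                       \<and> (\<forall>i j. \<not> (i < n \<and> j < n) \<longrightarrow> B i j = 0))"

text \<open>Curvature of a metric expressed in a frame E_0..E_(n-1).
  g a b = g(E_a,E_b), gi = inverse matrix, dg c a b = E_c(g_ab),
  ddg d c a b = E_d(E_c(g_ab)), C e a b = structure functions (constants):
  [E_a,E_b] = sum_e C e a b E_e.
  Conventions: R(X,Y)Z = nabla_X nabla_Y Z - nabla_Y nabla_X Z - nabla_[X,Y] Z,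
  Ric(Y,Z) = trace (X -> R(X,Y)Z), S = trace of Ric.\<close>

definition frame_Gamma :: "nat \<Rightarrow> (nat \<Rightarrow> nat \<Rightarrow> real) \<Rightarrow> (nat \<Rightarrow> nat \<Rightarrow> nat \<Rightarrow> real)
    \<Rightarrow> (nat \<Rightarrow> nat \<Rightarrow> nat \<Rightarrow> real) \<Rightarrow> nat \<Rightarrow> nat \<Rightarrow> nat \<Rightarrow> real" where
  \<comment> \<open>g(nabla_{E_a} E_b, E_c), by the Koszul formula\<close>
  "frame_Gamma n g dg C a b c =
     (dg a b c + dg b a c - dg c a b
      + (\<Sum>e<n. C e a b * g e c) - (\<Sum>e<n. C e a c * g e b) - (\<Sum>e<n. C e b c * g e a)) / 2"

definition frame_dGamma :: "nat \<Rightarrow> (nat \<Rightarrow> nat \<Rightarrow> nat \<Rightarrow> real)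
    \<Rightarrow> (nat \<Rightarrow> nat \<Rightarrow> nat \<Rightarrow> nat \<Rightarrow> real) \<Rightarrow> (nat \<Rightarrow> nat \<Rightarrow> nat \<Rightarrow> real)
    \<Rightarrow> nat \<Rightarrow> nat \<Rightarrow> nat \<Rightarrow> nat \<Rightarrow> real" where
  \<comment> \<open>E_d applied to frame_Gamma a b c\<close>
  "frame_dGamma n dg ddg C d a b c =
     (ddg d a b c + ddg d b a c - ddg d c a b
      + (\<Sum>e<n. C e a b * dg d e c) - (\<Sum>e<n. C e a c * dg d e b) - (\<Sum>e<n. C e b c * dg d e a)) / 2"

definition frame_Riem :: "nat \<Rightarrow> (nat \<Rightarrow> nat \<Rightarrow> real) \<Rightarrow> (nat \<Rightarrow> nat \<Rightarrow> real)
    \<Rightarrow> (nat \<Rightarrow> nat \<Rightarrow> nat \<Rightarrow> real) \<Rightarrow> (nat \<Rightarrow> nat \<Rightarrow> nat \<Rightarrow> nat \<Rightarrow> real)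
    \<Rightarrow> (nat \<Rightarrow> nat \<Rightarrow> nat \<Rightarrow> real) \<Rightarrow> nat \<Rightarrow> nat \<Rightarrow> nat \<Rightarrow> nat \<Rightarrow> real" where
  \<comment> \<open>g(R(E_a,E_b)E_c, E_d)\<close>
  "frame_Riem n g gi dg ddg C a b c d =
     (let \<Gamma> = frame_Gamma n g dg C in
      frame_dGamma n dg ddg C a b c d - frame_dGamma n dg ddg C b a c d
      - (\<Sum>e<n. \<Sum>f<n. gi e f * (\<Gamma> b c e * \<Gamma> a d f - \<Gamma> a c e * \<Gamma> b d f))
      - (\<Sum>e<n. C e a b * \<Gamma> e c d))"

definition frame_Ric :: "nat \<Rightarrow> (nat \<Rightarrow> nat \<Rightarrow> real) \<Rightarrow> (nat \<Rightarrow> nat \<Rightarrow> real)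
    \<Rightarrow> (nat \<Rightarrow> nat \<Rightarrow> nat \<Rightarrow> real) \<Rightarrow> (nat \<Rightarrow> nat \<Rightarrow> nat \<Rightarrow> nat \<Rightarrow> real)
    \<Rightarrow> (nat \<Rightarrow> nat \<Rightarrow> nat \<Rightarrow> real) \<Rightarrow> nat \<Rightarrow> nat \<Rightarrow> real" where
  "frame_Ric n g gi dg ddg C b c =
     (\<Sum>a<n. \<Sum>d<n. gi a d * frame_Riem n g gi dg ddg C a b c d)"

definition frame_Scal :: "nat \<Rightarrow> (nat \<Rightarrow> nat \<Rightarrow> real) \<Rightarrow> (nat \<Rightarrow> nat \<Rightarrow> real)
    \<Rightarrow> (nat \<Rightarrow> nat \<Rightarrow> nat \<Rightarrow> real) \<Rightarrow> (nat \<Rightarrow> nat \<Rightarrow> nat \<Rightarrow> nat \<Rightarrow> real)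
    \<Rightarrow> (nat \<Rightarrow> nat \<Rightarrow> nat \<Rightarrow> real) \<Rightarrow> real" where
  "frame_Scal n g gi dg ddg C =
     (\<Sum>b<n. \<Sum>c<n. gi b c * frame_Ric n g gi dg ddg C b c)"

text \<open>Lie algebra of G given by structure constants gam k i j:
  [e_i,e_j] = sum_k gam k i j e_k, indices 0,1,2.\<close>

definition lie_structure_constants :: "(nat \<Rightarrow> nat \<Rightarrow> nat \<Rightarrow> real) \<Rightarrow> bool" where
  "lie_structure_constants gam \<longleftrightarrow>
     (\<forall>k<3. \<forall>i<3. \<forall>j<3. gam k i j = - gam k j i) \<and>
     (\<forall>i<3. \<forall>j<3. \<forall>k<3. \<forall>d<3.
        (\<Sum>e<3. gam e i j * gam d e k + gam e j k * gam d e i + gam e k i * gam d e j) = 0)"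

text \<open>Spacetime frame: index 0 is \<partial>_t, index i+1 is e_i.
  a, a', a'' : the spatial metric and its first two time derivatives.\<close>

definition st_g :: "(real \<Rightarrow> nat \<Rightarrow> nat \<Rightarrow> real) \<Rightarrow> real \<Rightarrow> nat \<Rightarrow> nat \<Rightarrow> real" where
  "st_g a t x y = (if x = 0 \<and> y = 0 then -1 else if x = 0 \<or> y = 0 then 0
                   else a t (x - 1) (y - 1))"

definition st_dg :: "(real \<Rightarrow> nat \<Rightarrow> nat \<Rightarrow> real) \<Rightarrow> real \<Rightarrow> nat \<Rightarrow> nat \<Rightarrow> nat \<Rightarrow> real" where
  "st_dg a' t c x y = (if c = 0 \<and> x \<noteq> 0 \<and> y \<noteq> 0 then a' t (x - 1) (y - 1) else 0)"

definition st_ddg :: "(real \<Rightarrow> nat \<Rightarrow> nat \<Rightarrow> real) \<Rightarrow> real \<Rightarrow> nat \<Rightarrow> nat \<Rightarrow> nat \<Rightarrow> nat \<Rightarrow> real" where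
  "st_ddg a'' t d c x y =
     (if d = 0 \<and> c = 0 \<and> x \<noteq> 0 \<and> y \<noteq> 0 then a'' t (x - 1) (y - 1) else 0)"

definition st_C :: "(nat \<Rightarrow> nat \<Rightarrow> nat \<Rightarrow> real) \<Rightarrow> nat \<Rightarrow> nat \<Rightarrow> nat \<Rightarrow> real" where
  "st_C gam e x y = (if e = 0 \<or> x = 0 \<or> y = 0 then 0 else gam (e - 1) (x - 1) (y - 1))"

definition st_Ric :: "(real \<Rightarrow> nat \<Rightarrow> nat \<Rightarrow> real) \<Rightarrow> (real \<Rightarrow> nat \<Rightarrow> nat \<Rightarrow> real)
    \<Rightarrow> (real \<Rightarrow> nat \<Rightarrow> nat \<Rightarrow> real) \<Rightarrow> (nat \<Rightarrow> nat \<Rightarrow> nat \<Rightarrow> real) \<Rightarrow> real \<Rightarrow> nat \<Rightarrow> nat \<Rightarrow> real" where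
  "st_Ric a a' a'' gam t = frame_Ric 4 (st_g a t) (mat_inv 4 (st_g a t)) (st_dg a' t) (st_ddg a'' t) (st_C gam)"

definition st_Scal :: "(real \<Rightarrow> nat \<Rightarrow> nat \<Rightarrow> real) \<Rightarrow> (real \<Rightarrow> nat \<Rightarrow> nat \<Rightarrow> real)
    \<Rightarrow> (real \<Rightarrow> nat \<Rightarrow> nat \<Rightarrow> real) \<Rightarrow> (nat \<Rightarrow> nat \<Rightarrow> nat \<Rightarrow> real) \<Rightarrow> real \<Rightarrow> real" where
  "st_Scal a a' a'' gam t = frame_Scal 4 (st_g a t) (mat_inv 4 (st_g a t)) (st_dg a' t) (st_ddg a'' t) (st_C gam)"

text \<open>Energy-momentum tensor determined by Einstein's equations
  T = Ric - S/2 g + Lambda g, in the frame \<partial>_t, e_i.\<close>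

definition st_T :: "(real \<Rightarrow> nat \<Rightarrow> nat \<Rightarrow> real) \<Rightarrow> (real \<Rightarrow> nat \<Rightarrow> nat \<Rightarrow> real)
    \<Rightarrow> (real \<Rightarrow> nat \<Rightarrow> nat \<Rightarrow> real) \<Rightarrow> (nat \<Rightarrow> nat \<Rightarrow> nat \<Rightarrow> real) \<Rightarrow> real \<Rightarrow> real \<Rightarrow> nat \<Rightarrow> nat \<Rightarrow> real" where
  "st_T a a' a'' gam \<Lambda> t x y = st_Ric a a' a'' gam t x y
      - st_Scal a a' a'' gam t / 2 * st_g a t x y + \<Lambda> * st_g a t x y"

definition rho :: "(real \<Rightarrow> nat \<Rightarrow> nat \<Rightarrow> real) \<Rightarrow> (real \<Rightarrow> nat \<Rightarrow> nat \<Rightarrow> real)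
    \<Rightarrow> (real \<Rightarrow> nat \<Rightarrow> nat \<Rightarrow> real) \<Rightarrow> (nat \<Rightarrow> nat \<Rightarrow> nat \<Rightarrow> real) \<Rightarrow> real \<Rightarrow> real \<Rightarrow> real" where
  "rho a a' a'' gam \<Lambda> t = st_T a a' a'' gam \<Lambda> t 0 0"

text \<open>Scalar curvature of G x {t} with the left invariant metric a(t).\<close>

definition Sbar :: "(real \<Rightarrow> nat \<Rightarrow> nat \<Rightarrow> real) \<Rightarrow> (nat \<Rightarrow> nat \<Rightarrow> nat \<Rightarrow> real) \<Rightarrow> real \<Rightarrow> real" where
  "Sbar a gam t = frame_Scal 3 (a t) (mat_inv 3 (a t)) (\<lambda>_ _ _. 0) (\<lambda>_ _ _ _. 0) gam"

definition kbar :: "(real \<Rightarrow> nat \<Rightarrow> nat \<Rightarrow> real) \<Rightarrow> real \<Rightarrow> nat \<Rightarrow> nat \<Rightarrow> real" where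
  "kbar a' t i j = a' t i j / 2"

definition theta :: "(real \<Rightarrow> nat \<Rightarrow> nat \<Rightarrow> real) \<Rightarrow> (real \<Rightarrow> nat \<Rightarrow> nat \<Rightarrow> real) \<Rightarrow> real \<Rightarrow> real" where
  "theta a a' t = (\<Sum>i<3. \<Sum>j<3. mat_inv 3 (a t) i j * kbar a' t i j)"

definition sigmabar :: "(real \<Rightarrow> nat \<Rightarrow> nat \<Rightarrow> real) \<Rightarrow> (real \<Rightarrow> nat \<Rightarrow> nat \<Rightarrow> real) \<Rightarrow> real \<Rightarrow> nat \<Rightarrow> nat \<Rightarrow> real" where
  "sigmabar a a' t i j = kbar a' t i j - theta a a' t / 3 * a t i j"

definition Sigma_low :: "(real \<Rightarrow> nat \<Rightarrow> nat \<Rightarrow> real) \<Rightarrow> (real \<Rightarrow> nat \<Rightarrow> nat \<Rightarrow> real) \<Rightarrow> real \<Rightarrow> nat \<Rightarrow> nat \<Rightarrow> real" where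
  "Sigma_low a a' t i j = sigmabar a a' t i j / theta a a' t"

definition Sigma_mixed :: "(real \<Rightarrow> nat \<Rightarrow> nat \<Rightarrow> real) \<Rightarrow> (real \<Rightarrow> nat \<Rightarrow> nat \<Rightarrow> real) \<Rightarrow> real \<Rightarrow> nat \<Rightarrow> nat \<Rightarrow> real" where
  "Sigma_mixed a a' t i m = (\<Sum>j<3. mat_inv 3 (a t) i j * Sigma_low a a' t j m)"

end

theory Submission
  imports Defs
begin


lemma sum4: "sum f {..<4::nat} = f 0 + (\<Sum>i<3. f (Suc i))"
  by (simp add: numeral_eq_Suc sum.lessThan_Suc_shift del: sum.lessThan_Suc)

lemma sum3: "sum f {..<3::nat} = f 0 + f 1 + f 2"
  by (simp add: numeral_eq_Suc)

abbreviation "G4 a a' gam t \<equiv> frame_Gamma 4 (st_g a t) (st_dg a' t) (st_C gam)"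

lemma stC0[simp]: "st_C gam 0 x y = 0" "st_C gam e 0 y = 0" "st_C gam e x 0 = 0"
  "st_C gam (Suc e) (Suc x) (Suc y) = gam e x y" by (auto simp: st_C_def)
lemma stg[simp]: "st_g a t 0 0 = -1" "st_g a t 0 (Suc y) = 0" "st_g a t (Suc x) 0 = 0"
  "st_g a t (Suc x) (Suc y) = a t x y" by (auto simp: st_g_def)
lemma stdg[simp]: "st_dg a' t (Suc c) x y = 0" "st_dg a' t c 0 y = 0" "st_dg a' t c x 0 = 0"
  "st_dg a' t 0 (Suc x) (Suc y) = a' t x y" by (auto simp: st_dg_def)
lemma stddg[simp]: "st_ddg a'' t (Suc d) c x y = 0" "st_ddg a'' t d (Suc c) x y = 0" "st_ddg a'' t d c 0 y = 0" "st_ddg a'' t d c x 0 = 0"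
  "st_ddg a'' t 0 0 (Suc x) (Suc y) = a'' t x y" by (auto simp: st_ddg_def)

lemma G4_00: "G4 a a' gam t 0 0 c = 0"
  by (cases c) (simp_all add: frame_Gamma_def sum4)
lemma G4_0S0: "G4 a a' gam t 0 (Suc i) 0 = 0"
  by (simp add: frame_Gamma_def sum4)
lemma G4_0SS: "G4 a a' gam t 0 (Suc i) (Suc j) = a' t i j / 2"
  by (simp add: frame_Gamma_def sum4)
lemma G4_S00: "G4 a a' gam t (Suc i) 0 0 = 0"
  by (simp add: frame_Gamma_def sum4)
lemma G4_S0S: "G4 a a' gam t (Suc i) 0 (Suc j) = a' t i j / 2"
  by (simp add: frame_Gamma_def sum4)
lemma G4_SS0: "G4 a a' gam t (Suc i) (Suc j) 0 = - a' t i j / 2"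
  by (simp add: frame_Gamma_def sum4)
lemma G4_SSS: "G4 a a' gam t (Suc i) (Suc j) (Suc k) = frame_Gamma 3 (a t) (\<lambda>_ _ _. 0) gam i j k"
  by (simp add: frame_Gamma_def sum4)



definition gi4 :: "(nat \<Rightarrow> nat \<Rightarrow> real) \<Rightarrow> nat \<Rightarrow> nat \<Rightarrow> real" where
  "gi4 b x y = (if x=0 \<and> y=0 then -1 else if x=0 \<or> y=0 then 0 else b (x-1) (y-1))"
lemma gi4[simp]: "gi4 b 0 0 = -1" "gi4 b 0 (Suc y) = 0" "gi4 b (Suc x) 0 = 0" "gi4 b (Suc x) (Suc y) = b x y"
  by (auto simp: gi4_def)

abbreviation "R4 a a' a'' gam t b \<equiv> frame_Riem 4 (st_g a t) (gi4 b) (st_dg a' t) (st_ddg a'' t) (st_C gam)"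

lemmas G4s = G4_00 G4_0S0 G4_0SS G4_S00 G4_S0S G4_SS0 G4_SSS

lemma R4_0000: "R4 a a' a'' gam t b 0 0 0 0 = 0"
  by (simp add: frame_Riem_def Let_def frame_dGamma_def sum4 G4s sum_negf)

lemma R4_S00S: "R4 a a' a'' gam t b (Suc k) 0 0 (Suc l) =
   - a'' t k l / 2 + (\<Sum>e<3. \<Sum>f<3. b e f * (a' t k e / 2 * (a' t l f / 2)))"
  by (simp add: frame_Riem_def Let_def frame_dGamma_def sum4 G4s sum_negf)

lemma R4_0SS0: "R4 a a' a'' gam t b 0 (Suc i) (Suc j) 0 =
   - a'' t i j / 2 + (\<Sum>e<3. \<Sum>f<3. b e f * (a' t j e / 2 * (a' t i f / 2)))"
  by (simp add: frame_Riem_def Let_def frame_dGamma_def sum4 G4s sum_negf)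

lemma R4_SSSS: "R4 a a' a'' gam t b (Suc k) (Suc i) (Suc j) (Suc l) =
   frame_Riem 3 (a t) b (\<lambda>_ _ _. 0) (\<lambda>_ _ _ _. 0) gam k i j l
   + (a' t i j / 2 * (a' t k l / 2) - a' t k j / 2 * (a' t i l / 2))"
  by (simp add: frame_Riem_def Let_def frame_dGamma_def sum4 G4s algebra_simps)



lemma rho_formula:
  assumes gi: "mat_inv 4 (st_g a t) = gi4 b" and bdef: "b = mat_inv 3 (a t)"
    and bs: "\<And>i j. b i j = b j i"
  shows "rho a a' a'' gam \<Lambda> t = (Sbar a gam t + (theta a a' t)\<^sup>2
      - (\<Sum>i<3. \<Sum>j<3. \<Sum>k<3. \<Sum>l<3. b i j * b k l * (kbar a' t k j * kbar a' t i l))) / 2 - \<Lambda>"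
proof -
  define X where "X = (\<Sum>k<3. \<Sum>l<3. b k l * R4 a a' a'' gam t b (Suc k) 0 0 (Suc l))"
  define Y where "Y = (\<Sum>i<3. \<Sum>j<3. b i j * (\<Sum>k<3. \<Sum>l<3. b k l * R4 a a' a'' gam t b (Suc k) (Suc i) (Suc j) (Suc l)))"
  have ric00: "st_Ric a a' a'' gam t 0 0 = X"
    unfolding st_Ric_def gi frame_Ric_def X_def by (simp add: sum4 R4_0000)
  have XR: "(\<Sum>i<3. \<Sum>j<3. b i j * R4 a a' a'' gam t b 0 (Suc i) (Suc j) 0) = X"
  proof -
    have s: "b (Suc 0) 0 = b 0 (Suc 0)" "b 2 0 = b 0 2" "b 2 (Suc 0) = b (Suc 0) 2" using bs by auto
    show ?thesis unfolding X_def R4_S00S R4_0SS0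
      by (simp add: sum3 s algebra_simps)
  qed
  have scal: "st_Scal a a' a'' gam t = - X + (- X + Y)"
  proof -
    have "st_Scal a a' a'' gam t = - X + (\<Sum>i<3. \<Sum>j<3. b i j * (- R4 a a' a'' gam t b 0 (Suc i) (Suc j) 0
        + (\<Sum>k<3. \<Sum>l<3. b k l * R4 a a' a'' gam t b (Suc k) (Suc i) (Suc j) (Suc l))))"
      using ric00 unfolding st_Scal_def st_Ric_def gi frame_Scal_def
      by (simp add: sum4 frame_Ric_def)
    also have "\<dots> = - X + (- X + Y)"
      unfolding Y_def XR[symmetric] by (simp add: algebra_simps sum.distrib sum_negf sum_subtractf)
    finally show ?thesis .
  qed
  have rho1: "rho a a' a'' gam \<Lambda> t = Y / 2 - \<Lambda>"
    unfolding rho_def st_T_def ric00 scal by (simp add: st_g_def field_simps)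
  have prod4: "\<And>f g. (\<Sum>i<3::nat. \<Sum>j<3::nat. f i j) * (\<Sum>k<3::nat. \<Sum>l<3::nat. g k l) = (\<Sum>i<3. \<Sum>j<3. \<Sum>k<3. \<Sum>l<3. (f i j * g k l::real))"
    unfolding sum_distrib_right unfolding sum_distrib_left by simp
  have "Y = Sbar a gam t + (theta a a' t)\<^sup>2
      - (\<Sum>i<3. \<Sum>j<3. \<Sum>k<3. \<Sum>l<3. b i j * b k l * (kbar a' t k j * kbar a' t i l))"
    unfolding Y_def R4_SSSS Sbar_def frame_Scal_def frame_Ric_def theta_def bdef[symmetric] power2_eq_square
      prod4 kbar_def
    by (simp add: algebra_simps sum.distrib sum_subtractf sum_distrib_left)
  then show ?thesis using rho1 by simp
qed



definition det3 :: "(nat \<Rightarrow> nat \<Rightarrow> real) \<Rightarrow> real" where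
  "det3 A = A 0 0 * (A 1 1 * A 2 2 - A 1 2 * A 2 1) - A 0 1 * (A 1 0 * A 2 2 - A 1 2 * A 2 0)
           + A 0 2 * (A 1 0 * A 2 1 - A 1 1 * A 2 0)"
definition cof3 :: "(nat \<Rightarrow> nat \<Rightarrow> real) \<Rightarrow> nat \<Rightarrow> nat \<Rightarrow> real" where
  "cof3 A i j = (if i = 0 \<and> j = 0 then A 1 1 * A 2 2 - A 1 2 * A 2 1 else 
     if i = 0 \<and> j = 1 then A 0 2 * A 2 1 - A 0 1 * A 2 2 else 
     if i = 0 \<and> j = 2 then A 0 1 * A 1 2 - A 0 2 * A 1 1 else 
     if i = 1 \<and> j = 0 then A 1 2 * A 2 0 - A 1 0 * A 2 2 else 
     if i = 1 \<and> j = 1 then A 0 0 * A 2 2 - A 0 2 * A 2 0 else 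
     if i = 1 \<and> j = 2 then A 0 2 * A 1 0 - A 0 0 * A 1 2 else 
     if i = 2 \<and> j = 0 then A 1 0 * A 2 1 - A 1 1 * A 2 0 else 
     if i = 2 \<and> j = 1 then A 0 1 * A 2 0 - A 0 0 * A 2 1 else 
     if i = 2 \<and> j = 2 then A 0 0 * A 1 1 - A 0 1 * A 1 0 else 0)"
lemma less3_cases: "i < (3::nat) \<Longrightarrow> i = 0 \<or> i = 1 \<or> i = 2" by auto

lemma cof3_right: assumes "i < 3" "k < 3"
  shows "(\<Sum>j<3. A i j * cof3 A j k) = (if i = k then det3 A else 0)"
  using less3_cases[OF assms(1)] less3_cases[OF assms(2)]
  by (elim disjE) (simp_all add: sum3 cof3_def det3_def algebra_simps)

lemma cof3_left: assumes "i < 3" "k < 3"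
  shows "(\<Sum>j<3. cof3 A i j * A j k) = (if i = k then det3 A else 0)"
  using less3_cases[OF assms(1)] less3_cases[OF assms(2)]
  by (elim disjE) (simp_all add: sum3 cof3_def det3_def algebra_simps)
lemma mat_inv_unique:
  assumes AB: "\<forall>i<n. \<forall>k<n. (\<Sum>j<n. A i j * B j k) = (if i = k then 1 else 0)"
    and CA: "\<forall>i<n. \<forall>k<n. (\<Sum>j<n. C i j * A j k) = (if i = k then 1 else 0)"
    and Bz: "\<forall>i j. \<not> (i < n \<and> j < n) \<longrightarrow> B i j = 0"
  shows "mat_inv n A = B"
proof -
  have ifm[simp]: "(if P then 1 else 0) * (x::real) = (if P then x else 0)" for P x by simp
  have key: "B' i k = C i k" if h: "\<forall>i<n. \<forall>k<n. (\<Sum>j<n. A i j * B' j k) = (if i = k then 1 else 0)"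
    and ik: "i < n" "k < n" for B' i k
  proof -
    have "C i k = (\<Sum>j<n. C i j * (if j = k then 1 else 0))"
      using ik by (simp add: if_distrib sum.delta' cong: if_cong)
    also have "\<dots> = (\<Sum>j<n. C i j * (\<Sum>l<n. A j l * B' l k))"
      using h ik by (intro sum.cong) auto
    also have "\<dots> = (\<Sum>j<n. \<Sum>l<n. C i j * A j l * B' l k)"
      unfolding sum_distrib_left by (simp add: mult.assoc)
    also have "\<dots> = (\<Sum>l<n. \<Sum>j<n. C i j * A j l * B' l k)"
      by (rule sum.swap)
    also have "\<dots> = (\<Sum>l<n. (\<Sum>j<n. C i j * A j l) * B' l k)"
      unfolding sum_distrib_right ..
    also have "\<dots> = (\<Sum>l<n. (if i = l then 1 else 0) * B' l k)"
      using CA ik by (intro sum.cong) auto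
    also have "\<dots> = B' i k" using ik by (simp add: sum.delta)
    finally show ?thesis by simp
  qed
  show ?thesis
    unfolding mat_inv_def
  proof (rule the_equality)
    show "(\<forall>i<n. \<forall>k<n. (\<Sum>j<n. A i j * B j k) = (if i = k then 1 else 0)) \<and>
          (\<forall>i j. \<not> (i < n \<and> j < n) \<longrightarrow> B i j = 0)" using AB Bz by blast
  next
    fix B' assume h: "(\<forall>i<n. \<forall>k<n. (\<Sum>j<n. A i j * B' j k) = (if i = k then 1 else 0)) \<and>
          (\<forall>i j. \<not> (i < n \<and> j < n) \<longrightarrow> B' i j = 0)"
    show "B' = B"
    proof (intro ext)
      fix i k show "B' i k = B i k"
      proof (cases "i < n \<and> k < n")
        case True
        have "B' i k = C i k" using key[of B' i k] h True by blast
        moreover have "B i k = C i k" using key[of B i k] AB True by blast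
        ultimately show ?thesis by simp
      next
        case False then show ?thesis using h Bz by auto
      qed
    qed
  qed
qed

definition inv3 :: "(nat \<Rightarrow> nat \<Rightarrow> real) \<Rightarrow> nat \<Rightarrow> nat \<Rightarrow> real" where
  "inv3 A i j = (if i < 3 \<and> j < 3 then cof3 A i j / det3 A else 0)"

lemma inv3_right: assumes "det3 A \<noteq> 0" "i < 3" "k < 3"
  shows "(\<Sum>j<3. A i j * inv3 A j k) = (if i = k then 1 else 0)"
proof -
  have "(\<Sum>j<3. A i j * inv3 A j k) = (\<Sum>j<3. A i j * cof3 A j k) / det3 A"
    using assms by (simp add: inv3_def sum_divide_distrib)
  then show ?thesis using cof3_right[OF assms(2,3)] assms(1) by simp
qed

lemma inv3_left: assumes "det3 A \<noteq> 0" "i < 3" "k < 3"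
  shows "(\<Sum>j<3. inv3 A i j * A j k) = (if i = k then 1 else 0)"
proof -
  have "(\<Sum>j<3. inv3 A i j * A j k) = (\<Sum>j<3. cof3 A i j * A j k) / det3 A"
    using assms by (simp add: inv3_def sum_divide_distrib)
  then show ?thesis using cof3_left[OF assms(2,3)] assms(1) by simp
qed

lemma mat_inv3: assumes "det3 A \<noteq> 0" shows "mat_inv 3 A = inv3 A"
  apply (rule mat_inv_unique[where C = "inv3 A"])
  using inv3_right[OF assms] inv3_left[OF assms] by (auto simp: inv3_def)

lemma pd_facts:
  fixes A :: "nat \<Rightarrow> nat \<Rightarrow> real"
  assumes sym: "\<forall>i<3. \<forall>j<3. A i j = A j i"
    and pd: "\<forall>w. (\<exists>i<3. w i \<noteq> 0) \<longrightarrow> (\<Sum>i<3. \<Sum>j<3. A i j * w i * w j) > 0"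
  shows "A 0 0 > 0" "A 0 0 * A 1 1 - A 0 1 * A 1 0 > 0" "det3 A > 0"
proof -
  have s: "A 1 0 = A 0 1" "A 2 0 = A 0 2" "A 2 1 = A 1 2" using sym by auto
  have "(\<Sum>i<3. \<Sum>j<3. A i j * (if i = 0 then 1 else 0) * (if j = 0 then 1 else 0)) > 0"
    using pd[rule_format, of "\<lambda>i. if i = 0 then 1 else 0"] by auto
  then show h1: "A 0 0 > 0" by (simp add: sum3)
  let ?w = "\<lambda>i::nat. if i = 0 then - A 0 1 else if i = 1 then A 0 0 else 0"
  have "(\<Sum>i<3. \<Sum>j<3. A i j * ?w i * ?w j) > 0"
  proof (rule pd[rule_format])
    show "\<exists>i<3. ?w i \<noteq> 0" using h1 by (intro exI[of _ 1]) simp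
  qed
  moreover have "(\<Sum>i<3. \<Sum>j<3. A i j * ?w i * ?w j) = A 0 0 * (A 0 0 * A 1 1 - A 0 1 * A 1 0)"
    by (simp add: sum3 s algebra_simps)
  ultimately have "A 0 0 * (A 0 0 * A 1 1 - A 0 1 * A 1 0) > 0" by simp
  then show h2: "A 0 0 * A 1 1 - A 0 1 * A 1 0 > 0" using h1 by (simp add: zero_less_mult_iff)
  let ?u = "\<lambda>i. cof3 A i 2"
  have "(\<Sum>i<3. \<Sum>j<3. A i j * ?u i * ?u j) > 0"
  proof (rule pd[rule_format])
    show "\<exists>i<3. ?u i \<noteq> 0" using h2 by (intro exI[of _ 2]) (simp add: cof3_def)
  qed
  moreover have "(\<Sum>i<3. \<Sum>j<3. A i j * ?u i * ?u j) = det3 A * (A 0 0 * A 1 1 - A 0 1 * A 1 0)"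
    by (simp add: sum3 s cof3_def det3_def algebra_simps)
  ultimately show "det3 A > 0" using h2 by (simp add: zero_less_mult_iff)
qed


lemma matvec: "(\<Sum>l<n. A k l * (\<Sum>j<n. B l j * (v j::real))) = (\<Sum>j<n. (\<Sum>l<n. A k l * B l j) * v j)"
proof -
  have "(\<Sum>l<n. A k l * (\<Sum>j<n. B l j * v j)) = (\<Sum>l<n. \<Sum>j<n. A k l * B l j * v j)"
    by (simp add: sum_distrib_left mult.assoc)
  also have "\<dots> = (\<Sum>j<n. \<Sum>l<n. A k l * B l j * v j)" by (rule sum.swap)
  also have "\<dots> = (\<Sum>j<n. (\<Sum>l<n. A k l * B l j) * v j)" by (simp add: sum_distrib_right)
  finally show ?thesis .
qed

lemma delta_sum: "k < (n::nat) \<Longrightarrow> (\<Sum>j<n. (if k = j then 1 else 0) * (v j::real)) = v k"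
proof -
  assume "k < n"
  have "(\<Sum>j<n. (if k = j then 1 else 0) * (v j::real)) = (\<Sum>j<n. if k = j then v j else 0)"
    by (rule sum.cong) auto
  then show ?thesis using \<open>k < n\<close> by simp
qed
lemma delta_sum': "k < (n::nat) \<Longrightarrow> (\<Sum>j<n. (v j::real) * (if j = k then 1 else 0)) = v k"
proof -
  assume "k < n"
  have "(\<Sum>j<n. (v j::real) * (if j = k then 1 else 0)) = (\<Sum>j<n. if j = k then v j else 0)"
    by (rule sum.cong) auto
  then show ?thesis using \<open>k < n\<close> by simp
qed

lemma inv3_sym: assumes sym: "\<forall>i<3. \<forall>j<3. A i j = A j i"
  shows "inv3 A i j = inv3 A j i"
proof -
  have s': "A (Suc 0) 0 = A 0 (Suc 0)" "A 2 0 = A 0 2" "A 2 (Suc 0) = A (Suc 0) 2" using sym by auto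
  have s: "A 1 0 = A 0 1" "A 2 0 = A 0 2" "A 2 1 = A 1 2" using sym by auto
  show ?thesis
  proof (cases "i < 3 \<and> j < 3")
    case True
    have i3: "i = 0 \<or> i = 1 \<or> i = 2" and j3: "j = 0 \<or> j = 1 \<or> j = 2" using True by auto
    have "cof3 A i j = cof3 A j i" using i3 j3
      by (elim disjE; simp add: cof3_def s' mult.commute)
    then show ?thesis by (simp add: inv3_def)
  next
    case False then show ?thesis by (auto simp: inv3_def)
  qed
qed

lemma inv3_pd:
  fixes A :: "nat \<Rightarrow> nat \<Rightarrow> real"
  assumes sym: "\<forall>i<3. \<forall>j<3. A i j = A j i"
    and pd: "\<forall>w. (\<exists>i<3. w i \<noteq> 0) \<longrightarrow> (\<Sum>i<3. \<Sum>j<3. A i j * w i * w j) > 0"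
  shows "\<forall>w. (\<exists>i<3. w i \<noteq> 0) \<longrightarrow> (\<Sum>i<3. \<Sum>j<3. inv3 A i j * w i * w j) > 0"
proof (intro allI impI)
  fix v :: "nat \<Rightarrow> real" assume v: "\<exists>i<3. v i \<noteq> 0"
  have det: "det3 A \<noteq> 0" using pd_facts[OF sym pd] by simp
  define u where "u k = (\<Sum>j<3. inv3 A k j * v j)" for k
  have Au: "(\<Sum>l<3. A k l * u l) = v k" if "k < 3" for k
    unfolding u_def matvec using inv3_right[OF det that] that
    by (simp add: delta_sum)
  have "\<exists>i<3. u i \<noteq> 0"
  proof (rule ccontr)
    assume "\<not> (\<exists>i<3. u i \<noteq> 0)"
    then have "\<forall>k<3. v k = 0" using Au by (auto simp: lessThan_def)
    then show False using v by auto
  qed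
  then have "0 < (\<Sum>k<3. \<Sum>l<3. A k l * u k * u l)" using pd by blast
  also have "\<dots> = (\<Sum>k<3. u k * (\<Sum>l<3. A k l * u l))"
    by (simp add: sum_distrib_left algebra_simps)
  also have "\<dots> = (\<Sum>k<3. u k * v k)" using Au by (intro sum.cong) auto
  also have "\<dots> = (\<Sum>i<3. \<Sum>j<3. inv3 A i j * v i * v j)"
    unfolding u_def by (simp add: sum_distrib_right sum_distrib_left algebra_simps)
  finally show "(\<Sum>i<3. \<Sum>j<3. inv3 A i j * v i * v j) > 0" .
qed


lemma chol:
  fixes b :: "nat \<Rightarrow> nat \<Rightarrow> real"
  assumes sym: "\<forall>i<3. \<forall>j<3. b i j = b j i"
    and pd: "\<forall>w. (\<exists>i<3. w i \<noteq> 0) \<longrightarrow> (\<Sum>i<3. \<Sum>j<3. b i j * w i * w j) > 0"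
  shows "\<exists>L::nat \<Rightarrow> nat \<Rightarrow> real. \<forall>i<3. \<forall>j<3. b i j = (\<Sum>k<3. L i k * L j k)"
proof -
  have s: "b 1 0 = b 0 1" "b 2 0 = b 0 2" "b 2 1 = b 1 2" using sym by auto
  note pf = pd_facts[OF sym pd]
  define m2 where "m2 = b 0 0 * b 1 1 - b 0 1 * b 1 0"
  define d2 where "d2 = m2 / b 0 0"
  define d3 where "d3 = det3 b / m2"
  have m2p: "m2 > 0" using pf m2_def by simp
  have d2p: "d2 > 0" using pf m2p d2_def by simp
  have d3p: "d3 > 0" using pf m2p d3_def by simp
  define r0 where "r0 = sqrt (b 0 0)"
  define r1 where "r1 = sqrt d2"
  define r2 where "r2 = sqrt d3"
  have r0: "r0 > 0" "r0 * r0 = b 0 0" using pf by (auto simp: r0_def)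
  have r1: "r1 > 0" "r1 * r1 = d2" using d2p by (auto simp: r1_def)
  have r2: "r2 > 0" "r2 * r2 = d3" using d3p by (auto simp: r2_def)
  define c where "c = (b 1 2 - b 0 2 * b 0 1 / b 0 0)"
  define L :: "nat \<Rightarrow> nat \<Rightarrow> real" where "L i k = (if i = 0 \<and> k = 0 then r0 else if i = 1 \<and> k = 0 then b 0 1 / r0
     else if i = 2 \<and> k = 0 then b 0 2 / r0 else if i = 1 \<and> k = 1 then r1
     else if i = 2 \<and> k = 1 then c / r1 else if i = 2 \<and> k = 2 then r2 else 0)" for i k
  have e00: "(\<Sum>k<3. L 0 k * L 0 k) = b 0 0" using r0 by (simp add: sum3 L_def)
  have e01: "(\<Sum>k<3. L 0 k * L 1 k) = b 0 1" using r0 by (simp add: sum3 L_def)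
  have e02: "(\<Sum>k<3. L 0 k * L 2 k) = b 0 2" using r0 by (simp add: sum3 L_def)
  have e11: "(\<Sum>k<3. L 1 k * L 1 k) = b 1 1"
  proof -
    have "(\<Sum>k<3. L 1 k * L 1 k) = b 0 1 * b 0 1 / (r0 * r0) + r1 * r1" by (simp add: sum3 L_def)
    also have "\<dots> = b 1 1" unfolding r0 r1 d2_def m2_def using pf s by (simp add: field_simps)
    finally show ?thesis .
  qed
  have e12: "(\<Sum>k<3. L 1 k * L 2 k) = b 1 2"
  proof -
    have "(\<Sum>k<3. L 1 k * L 2 k) = b 0 1 * b 0 2 / (r0 * r0) + c" using r1 by (simp add: sum3 L_def)
    also have "\<dots> = b 1 2" unfolding r0 c_def using pf by (simp add: field_simps)
    finally show ?thesis .
  qed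
  have poly: "b 0 2 * b 0 2 * m2 + (b 0 0 * b 1 2 - b 0 2 * b 0 1)^2 + b 0 0 * det3 b = b 2 2 * (b 0 0 * m2)"
    unfolding m2_def det3_def s by (simp add: algebra_simps power2_eq_square)
  have frac3: "\<And>P m x y d::real. P \<noteq> 0 \<Longrightarrow> m \<noteq> 0 \<Longrightarrow> x/P + y/(P*m) + d/m = (x*m + y + P*d)/(P*m)"
    by (simp add: field_simps)
  have t1: "b 0 2 * b 0 2 / (r0 * r0) = b 0 2 * b 0 2 / b 0 0" using r0 by simp
  have t2: "c * c / (r1 * r1) = (b 0 0 * b 1 2 - b 0 2 * b 0 1)^2 / (b 0 0 * m2)"
  proof -
    have "c = (b 0 0 * b 1 2 - b 0 2 * b 0 1) / b 0 0" unfolding c_def using pf by (simp add: field_simps)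
    then show ?thesis unfolding r1(2) d2_def using pf m2p by (simp add: power2_eq_square)
  qed
  have e22: "(\<Sum>k<3. L 2 k * L 2 k) = b 2 2"
  proof -
    have "(\<Sum>k<3. L 2 k * L 2 k) = b 0 2 * b 0 2 / (r0 * r0) + c * c / (r1 * r1) + r2 * r2"
      by (simp add: sum3 L_def)
    also have "\<dots> = b 0 2 * b 0 2 / b 0 0 + (b 0 0 * b 1 2 - b 0 2 * b 0 1)^2 / (b 0 0 * m2) + det3 b / m2"
      unfolding t1 t2 r2(2) d3_def ..
    also have "\<dots> = (b 0 2 * b 0 2 * m2 + (b 0 0 * b 1 2 - b 0 2 * b 0 1)^2 + b 0 0 * det3 b) / (b 0 0 * m2)"
      using pf m2p by (intro frac3) auto
    also have "\<dots> = b 2 2" unfolding poly using pf m2p by simp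
    finally show ?thesis .
  qed
  have "\<forall>i<3. \<forall>j<3. b i j = (\<Sum>k<3. L i k * L j k)"
  proof (intro allI impI)
    fix i j :: nat assume "i < 3" "j < 3"
    then have i3: "i = 0 \<or> i = 1 \<or> i = 2" and j3: "j = 0 \<or> j = 1 \<or> j = 2" by auto
    show "b i j = (\<Sum>k<3. L i k * L j k)" using i3 j3 e00 e01 e02 e11 e12 e22 s
      by (elim disjE) (simp_all add: mult.commute)
  qed
  then show ?thesis by blast
qed

lemma sos_id:
  fixes M :: "nat \<Rightarrow> nat \<Rightarrow> real" and x :: "nat \<Rightarrow> real"
  shows "(\<Sum>k<3. \<Sum>l<3. (\<alpha> * M k l - c * (3 * x k * x l - (\<Sum>p<3. x p * x p) * (if k = l then 1 else 0)))^2)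
    = \<alpha>^2 * (\<Sum>k<3. \<Sum>l<3. (M k l)^2)
      - 2 * \<alpha> * c * (3 * (\<Sum>k<3. \<Sum>l<3. M k l * x k * x l) - (\<Sum>p<3. x p * x p) * (\<Sum>k<3. M k k))
      + 6 * c^2 * (\<Sum>p<3. x p * x p)^2"
  by (simp add: sum3 power2_eq_square algebra_simps)

lemma E1: fixes L :: "nat \<Rightarrow> nat \<Rightarrow> real" shows
  "(\<Sum>i<3. \<Sum>j<3. (\<Sum>p<3. L i p * L j p) * v i * v j) = (\<Sum>k<3. (\<Sum>i<3. L i k * v i) * (\<Sum>i<3. L i k * v i))"
  by (simp add: sum3 algebra_simps)

lemma E2: fixes L :: "nat \<Rightarrow> nat \<Rightarrow> real" shows
  "(\<Sum>i<3. \<Sum>j<3. (\<Sum>p<3. L i p * L j p) * S i j) = (\<Sum>k<3. \<Sum>i<3. \<Sum>j<3. L i k * S i j * L j k)"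
  by (simp add: sum3 algebra_simps)

lemma E3c: fixes L P :: "nat \<Rightarrow> nat \<Rightarrow> real" shows
  "(\<Sum>i<3. \<Sum>j<3. (\<Sum>p<3. L i p * L j p) * (\<Sum>r<3. P j r * P i r)) = (\<Sum>p<3. \<Sum>r<3. (\<Sum>i<3. L i p * P i r)^2)"
  by (simp add: sum3 algebra_simps power2_eq_square)

lemma E3a: fixes L S :: "nat \<Rightarrow> nat \<Rightarrow> real" shows
  "(\<Sum>l<3. (\<Sum>r<3. L k r * L l r) * S i l) = (\<Sum>r<3. L k r * (\<Sum>l<3. S i l * L l r))"
  by (simp add: sum3 algebra_simps)

lemma E4a: fixes b S :: "nat \<Rightarrow> nat \<Rightarrow> real"
  assumes s: "b (Suc 0) 0 = b 0 (Suc 0)" "b 2 0 = b 0 2" "b 2 (Suc 0) = b (Suc 0) 2"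
  shows "(\<Sum>i<3. \<Sum>m<3. \<Sum>j<3. (\<Sum>j'<3. b i j' * S j' m) * b m j * v i * v j)
    = (\<Sum>a<3. \<Sum>m<3. S a m * (\<Sum>i<3. b i a * v i) * (\<Sum>i<3. b i m * v i))"
  by (simp add: sum3 algebra_simps s)

lemma E4b: fixes L S :: "nat \<Rightarrow> nat \<Rightarrow> real"
  shows "(\<Sum>a<3. \<Sum>m<3. S a m * (\<Sum>k<3. L a k * x k) * (\<Sum>k<3. L m k * x k))
    = (\<Sum>k<3. \<Sum>l<3. (\<Sum>i<3. \<Sum>j<3. L i k * S i j * L j l) * x k * x l)"
  by (simp add: sum3 algebra_simps)

definition Fb :: "(nat \<Rightarrow> nat \<Rightarrow> real) \<Rightarrow> (nat \<Rightarrow> nat \<Rightarrow> real) \<Rightarrow> (nat \<Rightarrow> nat \<Rightarrow> real) \<Rightarrow> real" where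
  "Fb b X Y = (\<Sum>i<3. \<Sum>j<3. \<Sum>k<3. \<Sum>l<3. b i j * b k l * (X k j * Y i l))"

lemma Fb_lin1: "Fb b (\<lambda>i j. \<alpha> * X i j + \<beta> * Y i j) Z = \<alpha> * Fb b X Z + \<beta> * Fb b Y Z"
  unfolding Fb_def by (simp add: sum.distrib sum_distrib_left algebra_simps)
lemma Fb_lin2: "Fb b Z (\<lambda>i j. \<alpha> * X i j + \<beta> * Y i j) = \<alpha> * Fb b Z X + \<beta> * Fb b Z Y"
  unfolding Fb_def by (simp add: sum.distrib sum_distrib_left algebra_simps)

lemma sum4swap: "(\<Sum>i\<in>A. \<Sum>j\<in>B. \<Sum>k\<in>C. \<Sum>l\<in>D. f i j k l) = (\<Sum>k\<in>C. \<Sum>l\<in>D. \<Sum>i\<in>A. \<Sum>j\<in>B. f i j k l)"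
proof -
  have "(\<Sum>i\<in>A. \<Sum>j\<in>B. \<Sum>k\<in>C. \<Sum>l\<in>D. f i j k l) = (\<Sum>i\<in>A. \<Sum>k\<in>C. \<Sum>j\<in>B. \<Sum>l\<in>D. f i j k l)"
    by (rule sum.cong[OF refl], rule sum.swap)
  also have "\<dots> = (\<Sum>k\<in>C. \<Sum>i\<in>A. \<Sum>j\<in>B. \<Sum>l\<in>D. f i j k l)" by (rule sum.swap)
  also have "\<dots> = (\<Sum>k\<in>C. \<Sum>i\<in>A. \<Sum>l\<in>D. \<Sum>j\<in>B. f i j k l)"
    by (rule sum.cong[OF refl], rule sum.cong[OF refl], rule sum.swap)
  also have "\<dots> = (\<Sum>k\<in>C. \<Sum>l\<in>D. \<Sum>i\<in>A. \<Sum>j\<in>B. f i j k l)"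
    by (rule sum.cong[OF refl], rule sum.swap)
  finally show ?thesis .
qed

lemma Fb_sym: "Fb b X Y = Fb b Y X"
  unfolding Fb_def by (subst sum4swap) (simp add: algebra_simps)

lemma Fb_A:
  assumes Asym: "\<forall>i<3. \<forall>j<3. A i j = A j i"
    and binv: "\<forall>i<3. \<forall>k<3. (\<Sum>j<3. b i j * A j k) = (if i = k then 1 else 0)"
  shows "Fb b X A = (\<Sum>i<3. \<Sum>j<3. b i j * X i j)"
proof -
  have inner: "(\<Sum>l<3. b i j * b k l * (X k j * A i l)) = b i j * X k j * (if k = i then 1 else 0)"
    if "i < 3" "k < 3" for i j k
  proof -
    have "(\<Sum>l<3. b i j * b k l * (X k j * A i l)) = b i j * X k j * (\<Sum>l<3. b k l * A l i)"
      using Asym that by (simp add: sum_distrib_left algebra_simps)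
    also have "\<dots> = b i j * X k j * (if k = i then 1 else 0)" using binv that by simp
    finally show ?thesis .
  qed
  have "Fb b X A = (\<Sum>i<3. \<Sum>j<3. \<Sum>k<3. b i j * X k j * (if k = i then 1 else 0))"
    unfolding Fb_def using inner by (intro sum.cong refl) auto
  also have "\<dots> = (\<Sum>i<3. \<Sum>j<3. b i j * X i j)"
  proof (intro sum.cong refl)
    fix i j :: nat assume "i \<in> {..<3}"
    then show "(\<Sum>k<3. b i j * X k j * (if k = i then 1 else 0)) = b i j * X i j"
      using delta_sum'[of i 3 "\<lambda>k. b i j * X k j"] by simp
  qed
  finally show ?thesis .
qed


lemma scalar_final:
  fixes s q T sg :: real
  assumes s: "s \<ge> 0" and sg: "sg \<ge> 0" and T: "T \<le> sg + 2/3" and sq: "s^2 * T \<ge> 3/2 * q^2"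
  shows "2 * s - 3 * q \<ge> - (3/2) * sg * s"
proof -
  have e1: "- (3/2) * sg * s = - (3/2) * (sg * s)" by simp
  have e0: "sg * s \<ge> 0" using s sg by simp
  show ?thesis
  proof (cases "q \<le> 0")
    case True
    then show ?thesis using e0 e1 s by linarith
  next
    case False
    have c1: "q^2 \<le> 2/3 * (s^2 * T)" using sq by simp
    have c2: "s^2 * T \<le> s^2 * (sg + 2/3)" by (rule mult_left_mono[OF T]) simp
    have c3: "(s * (2/3 + sg/2))^2 = 2/3 * (s^2 * (sg + 2/3)) + s^2 * sg^2 / 4"
      by (simp add: power2_eq_square algebra_simps)
    have c4: "s^2 * sg^2 / 4 \<ge> 0" by simp
    have "q^2 \<le> (s * (2/3 + sg/2))^2" using c1 c2 c3 c4 by linarith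
    then have "q \<le> s * (2/3 + sg/2)" by (rule power2_le_imp_le) (use s sg in simp)
    moreover have "s * (2/3 + sg/2) = 2/3 * s + (sg * s) / 2" by (simp add: algebra_simps)
    ultimately show ?thesis using e1 by linarith
  qed
qed

lemma final_alg:
  fixes A b K :: "nat \<Rightarrow> nat \<Rightarrow> real" and v :: "nat \<Rightarrow> real" and th Sp :: real
  assumes Asym: "\<forall>i<3. \<forall>j<3. A i j = A j i"
    and bsym: "\<forall>i<3. \<forall>j<3. b i j = b j i"
    and binv: "\<forall>i<3. \<forall>k<3. (\<Sum>j<3. b i j * A j k) = (if i = k then 1 else 0)"
    and bpd: "\<forall>w. (\<exists>i<3. w i \<noteq> 0) \<longrightarrow> (\<Sum>i<3. \<Sum>j<3. b i j * w i * w j) > 0"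
    and Ksym: "\<forall>i<3. \<forall>j<3. K i j = K j i"
    and thdef: "th = (\<Sum>i<3. \<Sum>j<3. b i j * K i j)"
    and thnz: "th \<noteq> 0"
    and ham: "Fb b K K \<le> Sp + th^2"
    and Sp: "Sp \<ge> 0"
  shows "(\<Sum>i<3. \<Sum>m<3. \<Sum>j<3. (2 * (if i = m then 1 else 0)
            - 3 * (\<Sum>j'<3. b i j' * ((K j' m - th / 3 * A j' m) / th))) * b m j * v i * v j)
         \<ge> - (3/2) * (Sp / th^2) * (\<Sum>i<3. \<Sum>j<3. b i j * v i * v j)"
proof -
  define Sl where "Sl j m = (K j m - th / 3 * A j m) / th" for j m
  have Sl_eq: "Sl = (\<lambda>i j. (1/th) * K i j + (-1/3) * A i j)"
    unfolding Sl_def using thnz by (intro ext) (simp add: field_simps)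
  have Slsym: "Sl i j = Sl j i" if "i < 3" "j < 3" for i j
    using Asym Ksym that unfolding Sl_def by simp
  have trA: "(\<Sum>i<3. \<Sum>j<3. b i j * A i j) = 3"
  proof -
    have "(\<Sum>i<3. \<Sum>j<3. b i j * A i j) = (\<Sum>i<3::nat. (1::real))"
    proof (intro sum.cong refl)
      fix i :: nat assume i: "i \<in> {..<3}"
      have "(\<Sum>j<3. b i j * A i j) = (\<Sum>j<3. b i j * A j i)"
        using Asym i by (intro sum.cong refl) auto
      also have "\<dots> = 1" using binv i by simp
      finally show "(\<Sum>j<3. b i j * A i j) = 1" .
    qed
    then show ?thesis by simp
  qed
  have FKA: "Fb b K A = th" using Fb_A[OF Asym binv] thdef by simp
  have FAK: "Fb b A K = th" using FKA Fb_sym by metis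
  have FAA: "Fb b A A = 3" using Fb_A[OF Asym binv] trA by simp
  have FSS: "Fb b Sl Sl = Fb b K K / th^2 - 1/3"
    unfolding Sl_eq Fb_lin1 Fb_lin2 FKA FAK FAA using thnz
    by (simp add: field_simps power2_eq_square)
  have Tb: "Fb b Sl Sl \<le> Sp / th^2 + 2/3"
  proof -
    have "Fb b K K / th^2 \<le> (Sp + th^2) / th^2"
      using ham thnz by (simp add: divide_right_mono)
    also have "\<dots> = Sp / th^2 + 1" using thnz by (simp add: field_simps)
    finally show ?thesis unfolding FSS by simp
  qed
  have trS: "(\<Sum>i<3. \<Sum>j<3. b i j * Sl i j) = 0"
  proof -
    have pw: "b i j * Sl i j = (1/th) * (b i j * K i j) - (1/3) * (b i j * A i j)" for i j
      unfolding Sl_eq by (simp add: algebra_simps)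
    have "(\<Sum>i<3. \<Sum>j<3. b i j * Sl i j) = (1/th) * (\<Sum>i<3. \<Sum>j<3. b i j * K i j) - (1/3) * (\<Sum>i<3. \<Sum>j<3. b i j * A i j)"
      unfolding pw by (simp add: sum_subtractf sum_distrib_left)
    then show ?thesis using thdef trA thnz by simp
  qed
  obtain L :: "nat \<Rightarrow> nat \<Rightarrow> real" where bL0: "\<forall>i<3. \<forall>j<3. b i j = (\<Sum>k<3. L i k * L j k)"
    using chol[OF bsym bpd] by blast
  have bL: "b i j = (\<Sum>p<3. L i p * L j p)" if "i < 3" "j < 3" for i j using bL0 that by blast
  define x where "x k = (\<Sum>i<3. L i k * v i)" for k
  define M where "M k l = (\<Sum>i<3. \<Sum>j<3. L i k * Sl i j * L j l)" for k l
  define s where "s = (\<Sum>i<3. \<Sum>j<3. b i j * v i * v j)"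
  define q where "q = (\<Sum>k<3. \<Sum>l<3. M k l * x k * x l)"
  have s_x: "s = (\<Sum>p<3. x p * x p)"
  proof -
    have "s = (\<Sum>i<3. \<Sum>j<3. (\<Sum>p<3. L i p * L j p) * v i * v j)"
      unfolding s_def using bL by (intro sum.cong refl) auto
    then show ?thesis unfolding x_def E1 .
  qed
  have trM: "(\<Sum>k<3. M k k) = 0"
  proof -
    have "(\<Sum>k<3. M k k) = (\<Sum>i<3. \<Sum>j<3. (\<Sum>p<3. L i p * L j p) * Sl i j)"
      unfolding M_def E2 ..
    also have "\<dots> = (\<Sum>i<3. \<Sum>j<3. b i j * Sl i j)"
      using bL by (intro sum.cong refl) auto
    finally show ?thesis using trS by simp
  qed
  define P where "P i r = (\<Sum>l<3. Sl i l * L l r)" for i r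
  have TM: "Fb b Sl Sl = (\<Sum>k<3. \<Sum>l<3. (M k l)^2)"
  proof -
    have a: "(\<Sum>l<3. b i j * b k l * (Sl k j * Sl i l)) = b i j * Sl k j * (\<Sum>r<3. L k r * P i r)"
      if "i < 3" "k < 3" for i j k
    proof -
      have "(\<Sum>l<3. b i j * b k l * (Sl k j * Sl i l)) = b i j * Sl k j * (\<Sum>l<3. b k l * Sl i l)"
        by (simp add: sum_distrib_left algebra_simps)
      also have "(\<Sum>l<3. b k l * Sl i l) = (\<Sum>l<3. (\<Sum>r<3. L k r * L l r) * Sl i l)"
        using bL that by (intro sum.cong refl) auto
      also have "\<dots> = (\<Sum>r<3. L k r * P i r)" unfolding E3a P_def ..
      finally show ?thesis .
    qed
    have PS: "(\<Sum>k<3. Sl k j * L k r) = P j r" if "j < 3" for j r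
      unfolding P_def using Slsym that by (intro sum.cong refl) auto
    have b: "(\<Sum>k<3. b i j * Sl k j * (\<Sum>r<3. L k r * P i r)) = b i j * (\<Sum>r<3. P j r * P i r)"
      if "j < 3" for i j
    proof -
      have "(\<Sum>k<3. b i j * Sl k j * (\<Sum>r<3. L k r * P i r)) = b i j * (\<Sum>k<3. \<Sum>r<3. Sl k j * L k r * P i r)"
        by (simp add: sum_distrib_left algebra_simps)
      also have "(\<Sum>k<3. \<Sum>r<3. Sl k j * L k r * P i r) = (\<Sum>r<3. \<Sum>k<3. Sl k j * L k r * P i r)"
        by (rule sum.swap)
      also have "\<dots> = (\<Sum>r<3. (\<Sum>k<3. Sl k j * L k r) * P i r)"
        by (simp add: sum_distrib_right)
      also have "\<dots> = (\<Sum>r<3. P j r * P i r)" using PS that by simp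
      finally show ?thesis .
    qed
    have "Fb b Sl Sl = (\<Sum>i<3. \<Sum>j<3. \<Sum>k<3. b i j * Sl k j * (\<Sum>r<3. L k r * P i r))"
      unfolding Fb_def using a by (intro sum.cong refl) auto
    also have "\<dots> = (\<Sum>i<3. \<Sum>j<3. b i j * (\<Sum>r<3. P j r * P i r))"
      using b by (intro sum.cong refl) auto
    also have "\<dots> = (\<Sum>i<3. \<Sum>j<3. (\<Sum>p<3. L i p * L j p) * (\<Sum>r<3. P j r * P i r))"
      using bL by (intro sum.cong refl) auto
    also have "\<dots> = (\<Sum>p<3. \<Sum>r<3. (\<Sum>i<3. L i p * P i r)^2)" by (rule E3c)
    also have "\<dots> = (\<Sum>k<3. \<Sum>l<3. (M k l)^2)"
      unfolding M_def P_def by (simp add: sum_distrib_left mult.assoc)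
    finally show ?thesis .
  qed
  have bs': "b (Suc 0) 0 = b 0 (Suc 0)" "b 2 0 = b 0 2" "b 2 (Suc 0) = b (Suc 0) 2" using bsym by auto
  have LHS: "(\<Sum>i<3. \<Sum>m<3. \<Sum>j<3. (2 * (if i = m then 1 else 0)
            - 3 * (\<Sum>j'<3. b i j' * ((K j' m - th / 3 * A j' m) / th))) * b m j * v i * v j) = 2 * s - 3 * q"
  proof -
    have "(\<Sum>i<3. \<Sum>m<3. \<Sum>j<3. (2 * (if i = m then 1 else 0)
            - 3 * (\<Sum>j'<3. b i j' * ((K j' m - th / 3 * A j' m) / th))) * b m j * v i * v j)
        = 2 * (\<Sum>i<3. \<Sum>m<3. \<Sum>j<3. (if i = m then 1 else 0) * b m j * v i * v j)
          - 3 * (\<Sum>i<3. \<Sum>m<3. \<Sum>j<3. (\<Sum>j'<3. b i j' * Sl j' m) * b m j * v i * v j)"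
      unfolding Sl_def by (simp add: sum_subtractf sum_distrib_left algebra_simps)
    also have "(\<Sum>i<3. \<Sum>m<3. \<Sum>j<3. (if i = m then 1 else 0) * b m j * v i * v j) = s"
      unfolding s_def by (simp add: sum3)
    also have "(\<Sum>i<3. \<Sum>m<3. \<Sum>j<3. (\<Sum>j'<3. b i j' * Sl j' m) * b m j * v i * v j)
        = (\<Sum>a<3. \<Sum>m<3. Sl a m * (\<Sum>i<3. b i a * v i) * (\<Sum>i<3. b i m * v i))"
      by (rule E4a[OF bs'])
    also have "\<dots> = (\<Sum>a<3. \<Sum>m<3. Sl a m * (\<Sum>k<3. L a k * x k) * (\<Sum>k<3. L m k * x k))"
    proof -
      have w: "(\<Sum>i<3. b i a * v i) = (\<Sum>k<3. L a k * x k)" if "a < 3" for a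
      proof -
        have "(\<Sum>i<3. b i a * v i) = (\<Sum>i<3. (\<Sum>k<3. L i k * L a k) * v i)"
          using bL that by (intro sum.cong refl) auto
        also have "\<dots> = (\<Sum>k<3. L a k * x k)" unfolding x_def by (simp add: sum3 algebra_simps)
        finally show ?thesis .
      qed
      show ?thesis using w by (intro sum.cong refl) auto
    qed
    also have "\<dots> = q" unfolding q_def M_def by (rule E4b)
    finally show ?thesis .
  qed
  have sq: "s^2 * Fb b Sl Sl \<ge> 3/2 * q^2"
  proof -
    have "0 \<le> (\<Sum>k<3. \<Sum>l<3. (s^2 * M k l - (q/2) * (3 * x k * x l - (\<Sum>p<3. x p * x p) * (if k = l then 1 else 0)))^2)"
      by (intro sum_nonneg) auto
    also have "\<dots> = s^2 * (s^2 * Fb b Sl Sl - 3/2 * q^2)"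
      unfolding sos_id unfolding s_x[symmetric] TM[symmetric] q_def[symmetric] trM
      by (simp add: power2_eq_square algebra_simps)
    finally have h: "0 \<le> s^2 * (s^2 * Fb b Sl Sl - 3/2 * q^2)" .
    show ?thesis
    proof (cases "s = 0")
      case True
      then have "(\<Sum>p<3. x p * x p) = 0" using s_x by simp
      then have "\<forall>p\<in>{..<3}. x p * x p = 0"
        by (subst (asm) sum_nonneg_eq_0_iff) auto
      then have "\<forall>p<3. x p = 0" by simp
      then have "q = 0" unfolding q_def by simp
      then show ?thesis using True by simp
    next
      case False
      then have "s^2 > 0" by simp
      then show ?thesis using h by (simp add: zero_le_mult_iff)
    qed
  qed
  have s0: "s \<ge> 0" unfolding s_x by (intro sum_nonneg) auto
  have sg0: "Sp / th^2 \<ge> 0" using Sp by simp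
  have "2 * s - 3 * q \<ge> - (3/2) * (Sp / th^2) * s"
    by (rule scalar_final[OF s0 sg0 Tb sq])
  then show ?thesis unfolding LHS s_def .
qed


lemma gi4_inv:
  assumes det: "det3 (a t) \<noteq> 0"
  shows "mat_inv 4 (st_g a t) = gi4 (inv3 (a t))"
proof (rule mat_inv_unique[where C = "gi4 (inv3 (a t))"])
  show "\<forall>i<4. \<forall>k<4. (\<Sum>j<4. st_g a t i j * gi4 (inv3 (a t)) j k) = (if i = k then 1 else 0)"
  proof (intro allI impI)
    fix i k :: nat assume ik: "i < 4" "k < 4"
    show "(\<Sum>j<4. st_g a t i j * gi4 (inv3 (a t)) j k) = (if i = k then 1 else 0)"
    proof (cases i)
      case 0 then show ?thesis by (cases k) (simp_all add: sum4)
    next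
      case (Suc i') note i' = this
      show ?thesis
      proof (cases k)
        case 0 then show ?thesis using i' by (simp add: sum4)
      next
        case (Suc k')
        then show ?thesis using i' ik inv3_right[OF det, of i' k'] by (simp add: sum4)
      qed
    qed
  qed
  show "\<forall>i<4. \<forall>k<4. (\<Sum>j<4. gi4 (inv3 (a t)) i j * st_g a t j k) = (if i = k then 1 else 0)"
  proof (intro allI impI)
    fix i k :: nat assume ik: "i < 4" "k < 4"
    show "(\<Sum>j<4. gi4 (inv3 (a t)) i j * st_g a t j k) = (if i = k then 1 else 0)"
    proof (cases i)
      case 0 then show ?thesis by (cases k) (simp_all add: sum4)
    next
      case (Suc i') note i' = this
      show ?thesis
      proof (cases k)
        case 0 then show ?thesis using i' by (simp add: sum4)
      next
        case (Suc k')
        then show ?thesis using i' ik inv3_left[OF det, of i' k'] by (simp add: sum4)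
      qed
    qed
  qed
  show "\<forall>i j. \<not> (i < 4 \<and> j < 4) \<longrightarrow> gi4 (inv3 (a t)) i j = 0"
    by (auto simp: gi4_def inv3_def)
qed

theorem mainTheorem8:
  fixes I :: "real set"
    and a a' a'' :: "real \<Rightarrow> nat \<Rightarrow> nat \<Rightarrow> real"
    and gam :: "nat \<Rightarrow> nat \<Rightarrow> nat \<Rightarrow> real"
    and \<Lambda> :: real
  assumes I: "connected I" "open I" "I \<noteq> {}"
    and lie: "lie_structure_constants gam"
    and sym: "\<And>t i j. t \<in> I \<Longrightarrow> i < 3 \<Longrightarrow> j < 3 \<Longrightarrow> a t i j = a t j i"
    and posdef: "\<And>t (w :: nat \<Rightarrow> real). t \<in> I \<Longrightarrow> (\<exists>i<3. w i \<noteq> 0) \<Longrightarrow>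
                   (\<Sum>i<3. \<Sum>j<3. a t i j * w i * w j) > 0"
    and da: "\<And>t i j. t \<in> I \<Longrightarrow> i < 3 \<Longrightarrow> j < 3 \<Longrightarrow>
               ((\<lambda>s. a s i j) has_real_derivative a' t i j) (at t)"
    and dda: "\<And>t i j. t \<in> I \<Longrightarrow> i < 3 \<Longrightarrow> j < 3 \<Longrightarrow>
               ((\<lambda>s. a' s i j) has_real_derivative a'' t i j) (at t)"
    and rho_nonneg: "\<And>t. t \<in> I \<Longrightarrow> rho a a' a'' gam \<Lambda> t \<ge> 0"
    and Lambda_nonneg: "\<Lambda> \<ge> 0"
  shows "\<forall>(v :: nat \<Rightarrow> real). \<forall>t\<in>I. theta a a' t \<noteq> 0 \<longrightarrow>
           (\<Sum>i<3. \<Sum>m<3. \<Sum>j<3.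
              (2 * (if i = m then 1 else 0) - 3 * Sigma_mixed a a' t i m)
                * mat_inv 3 (a t) m j * v i * v j)
           \<ge> - (3 / 2) * (max (Sbar a gam t) 0 / (theta a a' t)\<^sup>2)
                * (\<Sum>i<3. \<Sum>j<3. mat_inv 3 (a t) i j * v i * v j)"
proof (intro allI ballI impI)
  fix v :: "nat \<Rightarrow> real" and t assume t: "t \<in> I" and thnz: "theta a a' t \<noteq> 0"
  have Asym: "\<forall>i<3. \<forall>j<3. a t i j = a t j i" using sym t by blast
  have Apd: "\<forall>w. (\<exists>i<3. w i \<noteq> 0) \<longrightarrow> (\<Sum>i<3. \<Sum>j<3. a t i j * w i * w j) > 0"
    using posdef t by blast
  have det: "det3 (a t) \<noteq> 0" using pd_facts[OF Asym Apd] by simp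
  define b where "b = inv3 (a t)"
  have mi3: "mat_inv 3 (a t) = b" unfolding b_def by (rule mat_inv3[OF det])
  have mi4: "mat_inv 4 (st_g a t) = gi4 b" unfolding b_def by (rule gi4_inv[of a t, OF det])
  have bsym_all: "\<And>i j. b i j = b j i" unfolding b_def by (rule inv3_sym[OF Asym])
  have bsym: "\<forall>i<3. \<forall>j<3. b i j = b j i" using bsym_all by blast
  have binv: "\<forall>i<3. \<forall>k<3. (\<Sum>j<3. b i j * a t j k) = (if i = k then 1 else 0)"
    unfolding b_def using inv3_left[OF det] by blast
  have bpd: "\<forall>w. (\<exists>i<3. w i \<noteq> 0) \<longrightarrow> (\<Sum>i<3. \<Sum>j<3. b i j * w i * w j) > 0"
    unfolding b_def by (rule inv3_pd[OF Asym Apd])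
  have a'sym: "a' t i j = a' t j i" if "i < 3" "j < 3" for i j
  proof -
    have d1: "((\<lambda>s. a s i j) has_real_derivative a' t i j) (at t)" using da t that by blast
    have d2: "((\<lambda>s. a s j i) has_real_derivative a' t j i) (at t)" using da t that by blast
    have d1': "((\<lambda>s. a s j i) has_real_derivative a' t i j) (at t)"
      by (rule has_field_derivative_transform_within_open[OF d1 I(2) t]) (use sym that in auto)
    show ?thesis using DERIV_unique[OF d1' d2] .
  qed
  have Ksym: "\<forall>i<3. \<forall>j<3. kbar a' t i j = kbar a' t j i"
    using a'sym by (simp add: kbar_def)
  have thdef: "theta a a' t = (\<Sum>i<3. \<Sum>j<3. b i j * kbar a' t i j)"
    unfolding theta_def mi3 ..
  have rf: "rho a a' a'' gam \<Lambda> t = (Sbar a gam t + (theta a a' t)\<^sup>2 - Fb b (kbar a' t) (kbar a' t)) / 2 - \<Lambda>"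
    unfolding Fb_def by (rule rho_formula[OF mi4 mi3[symmetric] bsym_all])
  have ham: "Fb b (kbar a' t) (kbar a' t) \<le> max (Sbar a gam t) 0 + (theta a a' t)\<^sup>2"
    using rf rho_nonneg[OF t] Lambda_nonneg by (simp add: field_simps)
  have Sp: "max (Sbar a gam t) 0 \<ge> 0" by simp
  have fa: "(\<Sum>i<3. \<Sum>m<3. \<Sum>j<3. (2 * (if i = m then 1 else 0)
            - 3 * (\<Sum>j'<3. b i j' * ((kbar a' t j' m - theta a a' t / 3 * a t j' m) / theta a a' t))) * b m j * v i * v j)
         \<ge> - (3/2) * (max (Sbar a gam t) 0 / (theta a a' t)^2) * (\<Sum>i<3. \<Sum>j<3. b i j * v i * v j)"
    by (rule final_alg[OF Asym bsym binv bpd Ksym thdef thnz ham Sp])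
  then show "(\<Sum>i<3. \<Sum>m<3. \<Sum>j<3.
              (2 * (if i = m then 1 else 0) - 3 * Sigma_mixed a a' t i m)
                * mat_inv 3 (a t) m j * v i * v j)
           \<ge> - (3 / 2) * (max (Sbar a gam t) 0 / (theta a a' t)\<^sup>2)
                * (\<Sum>i<3. \<Sum>j<3. mat_inv 3 (a t) i j * v i * v j)"
    unfolding Sigma_mixed_def Sigma_low_def sigmabar_def mi3 .
qed

end
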